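(* Let $n$ be a positive integer and $v$ an odd positive integer, let $q=v^{1/n}$, and assume $q\ge 3$. Put $m=\left\lfloor\frac{q-1}{2}\right\rfloor$. Then there exists a $(K,F,Z,S)$ placement delivery array with $K=F=q^n=v$, $Z=q^n-(2m)^n$, and $S=m^nq^n$; consequently there is a $v$-division $(v,M,N)$ coded caching scheme with memory ratio $\frac{M}{N}=1-\frac{2^nm^n}{q^n}$, subpacketization $v$, and transmission load $R=m^n$.
   Context: A $(K,F,Z,S)$ placement delivery array (PDA) is an $F\times K$ array $\mathbf{P}=(p_{j,k})$ with entries from $\{*\}\cup\{1,\dots,S\}$ such that: (C1) each column contains exactly $Z$ stars; (C2) each integer of $\{1,\dots,S\}$ occurs at least once; (C3) for any two distinct entries $p_{j_1,k_1}=p_{j_2,k_2}=s$ (an integer) we have $j_1\neq j_2$, $k_1\neq k_2$, and $p_{j_1,k_2}=p_{j_2,k_1}=*$. A $(K,M,N)$ coded caching system consists of a server storing $N$ equal-size files and $K$ users each with a cache of size $M$ files, connected by an error-free shared broadcast link. An $F$-division scheme splits each file into $F$ equal-size packets; in the placement phase packets are stored in user caches without knowledge of future demands; in the delivery phase each user requests one file and the server broadcasts coded messages (XORs of packets) so that every user can decode its requested file. The transmission load $R$ is the worst case over all demand vectors of the total broadcast size normalized by the file size; $M/N$ is the memory ratio. *)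

theory Defs
  imports Complex_Main
begin

text \<open>Placement delivery array. The F x K array is a function P with
  P j k for row j < F and column k < K; None is the star, Some s an integer entry.\<close>

definition is_PDA :: "nat \<Rightarrow> nat \<Rightarrow> nat \<Rightarrow> nat \<Rightarrow> (nat \<Rightarrow> nat \<Rightarrow> nat option) \<Rightarrow> bool" where
  "is_PDA K F Z S P \<longleftrightarrow>
     (\<forall>j<F. \<forall>k<K. \<forall>s. P j k = Some s \<longrightarrow> s \<in> {1..S}) \<and>
     (\<forall>k<K. card {j. j < F \<and> P j k = None} = Z) \<and>
     (\<forall>s\<in>{1..S}. \<exists>j<F. \<exists>k<K. P j k = Some s) \<and>
     (\<forall>j1<F. \<forall>k1<K. \<forall>j2<F. \<forall>k2<K. \<forall>s.
        P j1 k1 = Some s \<and> P j2 k2 = Some s \<and> (j1, k1) \<noteq> (j2, k2) \<longrightarrow>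
          j1 \<noteq> j2 \<and> k1 \<noteq> k2 \<and> P j1 k2 = None \<and> P j2 k1 = None)"

definition exists_PDA :: "nat \<Rightarrow> nat \<Rightarrow> nat \<Rightarrow> nat \<Rightarrow> bool" where
  "exists_PDA K F Z S \<longleftrightarrow> (\<exists>P. is_PDA K F Z S P)"

text \<open>A packet is a pair (file index i < N, packet index j < F).
  A coded message is the XOR of a finite set of packets, represented by that set;
  XOR of messages is symmetric difference. A user can decode a packet if the packet
  lies in the XOR-span (GF(2)-span) of its cached packets and the broadcast messages.\<close>

definition packets :: "nat \<Rightarrow> nat \<Rightarrow> (nat \<times> nat) set" where
  "packets N F = {(i, j). i < N \<and> j < F}"

inductive_set xor_span :: "(nat \<times> nat) set set \<Rightarrow> (nat \<times> nat) set set"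
  for G :: "(nat \<times> nat) set set" where
  zero: "{} \<in> xor_span G"
| add: "A \<in> xor_span G \<Longrightarrow> g \<in> G \<Longrightarrow> (A - g) \<union> (g - A) \<in> xor_span G"

text \<open>An F-division (K,M,N) coded caching scheme with uncoded placement
  (cache k = set of packets stored by user k, chosen independently of demands) and
  XOR-coded delivery (for each demand vector d, a list of coded messages),
  with memory at most M files per user and worst-case load at most R files.\<close>

definition is_caching_scheme ::
  "nat \<Rightarrow> real \<Rightarrow> nat \<Rightarrow> nat \<Rightarrow> real \<Rightarrow>
   (nat \<Rightarrow> (nat \<times> nat) set) \<Rightarrow> ((nat \<Rightarrow> nat) \<Rightarrow> (nat \<times> nat) set list) \<Rightarrow> bool" where
  "is_caching_scheme K M N F R cache deliver \<longleftrightarrow>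
     F > 0 \<and>
     (\<forall>k<K. cache k \<subseteq> packets N F \<and> real (card (cache k)) \<le> M * real F) \<and>
     (\<forall>d. (\<forall>k<K. d k < N) \<longrightarrow>
        (\<forall>msg \<in> set (deliver d). msg \<subseteq> packets N F) \<and>
        real (length (deliver d)) \<le> R * real F \<and>
        (\<forall>k<K. \<forall>j<F. {(d k, j)} \<in> xor_span ((\<lambda>p. {p}) ` cache k \<union> set (deliver d))))"

definition exists_caching_scheme :: "nat \<Rightarrow> real \<Rightarrow> nat \<Rightarrow> nat \<Rightarrow> real \<Rightarrow> bool" where
  "exists_caching_scheme K M N F R \<longleftrightarrow>
     (\<exists>cache deliver. is_caching_scheme K M N F R cache deliver)"

end

theory Submission
  imports Defs "HOL-Library.FuncSet"
begin

lemma digits_zero: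
  fixes f :: "nat \<Rightarrow> int" and a :: int
  assumes "a \<ge> 2" "\<forall>i<n. \<bar>f i\<bar> < a" "(\<Sum>i<n. f i * a^i) = 0"
  shows "\<forall>i<n. f i = 0"
  using assms(2,3)
proof (induction n arbitrary: f)
  case 0 then show ?case by simp
next
  case (Suc n)
  have eq: "(\<Sum>i<Suc n. f i * a^i) = f 0 + a * (\<Sum>i<n. f (Suc i) * a^i)"
    unfolding sum.lessThan_Suc_shift by (simp add: sum_distrib_left mult_ac)
  hence "f 0 = - a * (\<Sum>i<n. f (Suc i) * a^i)" using Suc.prems by simp
  hence dv: "a dvd f 0" by (metis dvd_minus_iff dvd_triv_left mult_minus_left)
  have f0: "f 0 = 0"
  proof (rule ccontr)
    assume "f 0 \<noteq> 0"
    then have "\<bar>a\<bar> \<le> \<bar>f 0\<bar>" using dvd_imp_le_int dv by blast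
    with Suc.prems(1) assms(1) show False by auto
  qed
  then have "(\<Sum>i<n. f (Suc i) * a^i) = 0" using eq Suc.prems assms(1) by simp
  moreover have "\<forall>i<n. \<bar>f (Suc i)\<bar> < a" using Suc.prems(1) by auto
  ultimately have "\<forall>i<n. f (Suc i) = 0" using Suc.IH[of "\<lambda>i. f (Suc i)"] by blast
  then show ?case using f0 by (auto simp: less_Suc_eq_0_disj)
qed

lemma digits_bound:
  fixes f :: "nat \<Rightarrow> int" and a :: int
  assumes "a \<ge> 1" "\<forall>i<n. \<bar>f i\<bar> \<le> a - 1"
  shows "\<bar>\<Sum>i<n. f i * a^i\<bar> \<le> a^n - 1"
  using assms(2)
proof (induction n)
  case 0 thus ?case by simp
next
  case (Suc n)
  have "\<bar>\<Sum>i<Suc n. f i * a^i\<bar> \<le> \<bar>\<Sum>i<n. f i * a^i\<bar> + \<bar>f n * a^n\<bar>"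
    by (simp add: abs_triangle_ineq)
  also have "\<bar>f n * a^n\<bar> \<le> (a-1) * a^n" using Suc.prems assms(1)
    by (simp add: abs_mult mult_right_mono)
  also have "\<bar>\<Sum>i<n. f i * a^i\<bar> \<le> a^n - 1" using Suc by simp
  finally show ?case by (simp add: algebra_simps)
qed

lemma digits_mod_zero:
  fixes f :: "nat \<Rightarrow> int" and a :: int and v :: nat
  assumes "a \<ge> 2" "a^n \<le> int v" "\<forall>i<n. \<bar>f i\<bar> \<le> a - 1" "int v dvd (\<Sum>i<n. f i * a^i)"
  shows "\<forall>i<n. f i = 0"
proof -
  have "\<bar>\<Sum>i<n. f i * a^i\<bar> \<le> a^n - 1" using digits_bound[of a n f] assms(1,3) by simp
  then have b: "\<bar>\<Sum>i<n. f i * a^i\<bar> < int v" using assms(2) by linarith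
  have "(\<Sum>i<n. f i * a^i) = 0"
  proof (rule ccontr)
    assume "(\<Sum>i<n. f i * a^i) \<noteq> 0"
    then have "\<bar>int v\<bar> \<le> \<bar>\<Sum>i<n. f i * a^i\<bar>" using dvd_imp_le_int assms(4) by blast
    with b show False by simp
  qed
  moreover have "\<forall>i<n. \<bar>f i\<bar> < a" using assms(3) by force
  ultimately show ?thesis using digits_zero[of a n f] assms(1) by blast
qed

lemma xor_gen: "g \<in> G \<Longrightarrow> g \<in> xor_span G"
  using xor_span.add[OF xor_span.zero, of g G] by simp

lemma xor_remove:
  assumes "finite B"
  shows "B \<subseteq> A \<Longrightarrow> \<forall>p\<in>B. {p} \<in> G \<Longrightarrow> A \<in> xor_span G \<Longrightarrow> A - B \<in> xor_span G"
  using assms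
proof (induction B rule: finite_induct)
  case empty then show ?case by simp
next
  case (insert p B)
  have "A - B \<in> xor_span G" using insert by auto
  moreover have "{p} \<in> G" using insert by auto
  ultimately have "((A - B) - {p}) \<union> ({p} - (A - B)) \<in> xor_span G" by (rule xor_span.add)
  moreover have "((A - B) - {p}) \<union> ({p} - (A - B)) = A - insert p B" using insert by auto
  ultimately show ?case by simp
qed

lemma pda_scheme:
  assumes pda: "is_PDA K F Z S P" and F: "F > 0"
    and MZ: "real N * real Z \<le> M * real F" and RS: "real S \<le> R * real F"
  shows "exists_caching_scheme K M N F R"
proof -
  define cache where "cache k = {(i, j). i < N \<and> j < F \<and> P j k = None}" for k
  define msg where "msg d s = {(d k, j) | j k. j < F \<and> k < K \<and> P j k = Some s}"
    for d :: "nat \<Rightarrow> nat" and s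
  define deliver where "deliver d = map (msg d) [1..<S+1]" for d
  have P1: "\<And>j k s. j < F \<Longrightarrow> k < K \<Longrightarrow> P j k = Some s \<Longrightarrow> s \<in> {1..S}"
    using pda unfolding is_PDA_def by blast
  have P2: "\<And>k. k < K \<Longrightarrow> card {j. j < F \<and> P j k = None} = Z"
    using pda unfolding is_PDA_def by blast
  have P4: "\<And>j1 k1 j2 k2 s. j1 < F \<Longrightarrow> k1 < K \<Longrightarrow> j2 < F \<Longrightarrow> k2 < K \<Longrightarrow>
      P j1 k1 = Some s \<Longrightarrow> P j2 k2 = Some s \<Longrightarrow> (j1, k1) \<noteq> (j2, k2) \<Longrightarrow>
      j1 \<noteq> j2 \<and> k1 \<noteq> k2 \<and> P j1 k2 = None \<and> P j2 k1 = None"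
    using pda unfolding is_PDA_def by blast
  have cache_eq: "cache k = {..<N} \<times> {j. j < F \<and> P j k = None}" for k
    unfolding cache_def by auto
  have fin_cache: "finite (cache k)" for k
    unfolding cache_eq by auto
  have "is_caching_scheme K M N F R cache deliver"
    unfolding is_caching_scheme_def
  proof (intro conjI allI impI ballI)
    show "F > 0" by fact
  next
    fix k assume k: "k < K"
    show "cache k \<subseteq> packets N F" unfolding cache_def packets_def by auto
    have "card (cache k) = N * Z" unfolding cache_eq using P2[OF k] by (simp add: card_cartesian_product)
    then show "real (card (cache k)) \<le> M * real F" using MZ by simp
  next
    fix d :: "nat \<Rightarrow> nat" assume d: "\<forall>k<K. d k < N"
    {
      fix mm assume "mm \<in> set (deliver d)"
      then show "mm \<subseteq> packets N F" unfolding deliver_def msg_def packets_def using d by auto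
    }
    show "real (length (deliver d)) \<le> R * real F" unfolding deliver_def using RS by simp
    {
      fix k j assume k: "k < K" and j: "j < F"
      let ?G = "(\<lambda>p. {p}) ` cache k \<union> set (deliver d)"
      show "{(d k, j)} \<in> xor_span ?G"
      proof (cases "P j k")
        case None
        then have "(d k, j) \<in> cache k" unfolding cache_def using d k j by auto
        then have "{(d k, j)} \<in> (\<lambda>p. {p}) ` cache k" by (rule imageI)
        then show ?thesis by (intro xor_gen UnI1)
      next
        case (Some s)
        have s: "s \<in> {1..S}" using P1[OF j k Some] .
        have "msg d s \<in> set (deliver d)" unfolding deliver_def set_map
          by (rule imageI) (use s in auto)
        then have A: "msg d s \<in> xor_span ?G"
          by (intro xor_gen UnI2)
        define B where "B = msg d s - {(d k, j)}"
        have Bsub: "B \<subseteq> cache k"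
        proof
          fix x assume "x \<in> B"
          then obtain j' k' where x: "x = (d k', j')" "j' < F" "k' < K" "P j' k' = Some s"
            and ne: "(d k', j') \<noteq> (d k, j)"
            unfolding B_def msg_def by blast
          have "(j', k') \<noteq> (j, k)" using ne by auto
          then have "P j' k = None" using P4[OF x(2,3) j k x(4) Some] by blast
          then show "x \<in> cache k" unfolding cache_def using x d by auto
        qed
        have "(d k, j) \<in> msg d s" unfolding msg_def using j k Some by blast
        then have eq: "msg d s - B = {(d k, j)}" unfolding B_def by auto
        have "msg d s - B \<in> xor_span ?G"
        proof (rule xor_remove[of B "msg d s" ?G])
          show "finite B" using Bsub fin_cache[of k] by (rule finite_subset)
          show "B \<subseteq> msg d s" unfolding B_def by blast
          show "\<forall>p\<in>B. {p} \<in> ?G" using Bsub by blast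
          show "msg d s \<in> xor_span ?G" by (rule A)
        qed
        then show ?thesis using eq by simp
      qed
    }
  qed
  then show ?thesis unfolding exists_caching_scheme_def by blast
qed


definition "D0 m = {-int m..int m} - {0}"
definition "EE m n = PiE {..<n} (\<lambda>_. D0 m)"
definition "Cp m n = PiE {..<n} (\<lambda>_. {1..int m})"
definition "rep m n e = (\<Sum>i<n. e i * (2*int m+1)^i)"
definition "negs m n e = (\<Sum>i<n. min (e i) 0 * (2*int m+1)^i)"
definition "adj m n v j k e \<longleftrightarrow> e \<in> EE m n \<and> int v dvd (int k - int j - rep m n e)"
definition "lab m n v h x e = 1 + nat ((int x + negs m n e) mod int v)
   + v * inv_into {0..<m^n} h (restrict (\<lambda>i. \<bar>e i\<bar>) {..<n})"
definition "PP m n v h j k = (if \<exists>e. adj m n v j k e then Some (lab m n v h j (SOME e. adj m n v j k e)) else None)"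

locale cons =
  fixes m n v :: nat and h :: "nat \<Rightarrow> nat \<Rightarrow> int"
  assumes m1: "m \<ge> 1" and mv: "(2*m+1)^n \<le> v" and hb: "bij_betw h {0..<m^n} (Cp m n)"
begin

abbreviation "a \<equiv> 2 * int m + 1"

lemma av: "a^n \<le> int v"
proof -
  have "int ((2*m+1)^n) \<le> int v" using mv by linarith
  then show ?thesis by (simp add: add.commute)
qed

lemma vpos: "v > 0"
  using mv by (metis gr0I le_zero_eq nat_power_eq_Suc_0_iff add_is_0 one_neq_zero power_eq_0_iff)

lemma D0_bound: "x \<in> D0 m \<Longrightarrow> \<bar>x\<bar> \<le> int m \<and> x \<noteq> 0"
  unfolding D0_def by auto

lemma EE_bound: "e \<in> EE m n \<Longrightarrow> i < n \<Longrightarrow> \<bar>e i\<bar> \<le> int m \<and> e i \<noteq> 0"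
  unfolding EE_def using D0_bound by (auto simp: PiE_iff)

lemma uniq:
  assumes "\<forall>i<n. \<bar>f i\<bar> \<le> 2 * int m" "int v dvd (\<Sum>i<n. f i * a^i)"
  shows "\<forall>i<n. f i = 0"
  using digits_mod_zero[of a n v f] assms av m1 by simp

lemma adj_unique:
  assumes "adj m n v j k e" "adj m n v j k e'"
  shows "e = e'"
proof -
  have E: "e \<in> EE m n" "e' \<in> EE m n" using assms unfolding adj_def by auto
  have "int v dvd ((int k - int j - rep m n e') - (int k - int j - rep m n e))"
    using assms unfolding adj_def by (metis dvd_diff)
  moreover have "(int k - int j - rep m n e') - (int k - int j - rep m n e) = (\<Sum>i<n. (e i - e' i) * a^i)"
    unfolding rep_def by (simp only: left_diff_distrib sum_subtractf; (linarith)?)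
  ultimately have d: "int v dvd (\<Sum>i<n. (e i - e' i) * a^i)" by simp
  have "\<forall>i<n. \<bar>e i - e' i\<bar> \<le> 2 * int m"
  proof (intro allI impI)
    fix i assume i: "i < n"
    show "\<bar>e i - e' i\<bar> \<le> 2 * int m" using EE_bound[OF E(1) i] EE_bound[OF E(2) i] by linarith
  qed
  then have "\<forall>i<n. e i - e' i = 0" using d by (rule uniq)
  then show ?thesis using E unfolding EE_def by (intro PiE_ext[of e "{..<n}"]) auto
qed

lemma PP_Some: "PP m n v h j k = Some s \<longleftrightarrow> (\<exists>e. adj m n v j k e \<and> s = lab m n v h j e)"
proof
  assume "PP m n v h j k = Some s"
  then have ex: "\<exists>e. adj m n v j k e" and s: "s = lab m n v h j (SOME e. adj m n v j k e)"
    unfolding PP_def by (auto split: if_splits)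
  then show "\<exists>e. adj m n v j k e \<and> s = lab m n v h j e" using someI_ex[OF ex] by blast
next
  assume "\<exists>e. adj m n v j k e \<and> s = lab m n v h j e"
  then obtain e where e: "adj m n v j k e" "s = lab m n v h j e" by blast
  have "(SOME e. adj m n v j k e) = e"
    by (rule some_equality[of "adj m n v j k" e, OF e(1)]) (rule adj_unique[OF _ e(1)])
  then show "PP m n v h j k = Some s" unfolding PP_def using e by auto
qed

lemma PP_None: "PP m n v h j k = None \<longleftrightarrow> \<not> (\<exists>e. adj m n v j k e)"
  unfolding PP_def by auto


lemma small_dvd:
  assumes "x < v" "y < v" "int v dvd (int x - int y)" shows "x = y"
proof (rule ccontr)
  assume "x \<noteq> y"
  then have "int x - int y \<noteq> 0" by simp
  from dvd_imp_le_int[OF this assms(3)] have "\<bar>int v\<bar> \<le> \<bar>int x - int y\<bar>" .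
  with assms(1,2) show False by linarith
qed

lemma Cp_EE: "Cp m n \<subseteq> EE m n"
  unfolding Cp_def EE_def by (intro PiE_mono) (auto simp: D0_def)

lemma idx_props:
  assumes "c \<in> Cp m n"
  shows "inv_into {0..<m^n} h c < m^n \<and> h (inv_into {0..<m^n} h c) = c"
proof -
  have "c \<in> h ` {0..<m^n}" using hb assms unfolding bij_betw_def by auto
  then show ?thesis using inv_into_into[of c h "{0..<m^n}"] f_inv_into_f[of c h] by auto
qed

lemma absv_Cp: assumes "e \<in> EE m n" shows "restrict (\<lambda>i. \<bar>e i\<bar>) {..<n} \<in> Cp m n"
  unfolding Cp_def restrict_PiE_iff
proof
  fix i assume "i \<in> {..<n}"
  then have "\<bar>e i\<bar> \<le> int m \<and> e i \<noteq> 0" using EE_bound[OF assms] by simp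
  then show "\<bar>e i\<bar> \<in> {1..int m}" by auto
qed

lemma lab_range:
  assumes "e \<in> EE m n"
  shows "lab m n v h x e \<in> {1..m^n * v}"
proof -
  define b where "b = nat ((int x + negs m n e) mod int v)"
  define t where "t = inv_into {0..<m^n} h (restrict (\<lambda>i. \<bar>e i\<bar>) {..<n})"
  have b: "b < v" unfolding b_def using vpos by (simp add: nat_less_iff)
  have t: "t < m^n" unfolding t_def using idx_props[OF absv_Cp[OF assms]] by blast
  have "1 + b + v * t \<le> v * (t + 1)" using b by simp
  also have "\<dots> \<le> v * m^n" using t by (intro mult_le_mono2) simp
  finally show ?thesis unfolding lab_def b_def[symmetric] t_def[symmetric] by (simp add: mult.commute)
qed

lemma lab_eq:
  assumes "e \<in> EE m n" "e' \<in> EE m n" "lab m n v h x e = lab m n v h y e'"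
  shows "int v dvd (int x + negs m n e - int y - negs m n e') \<and> (\<forall>i<n. \<bar>e i\<bar> = \<bar>e' i\<bar>)"
proof -
  define b where "b = nat ((int x + negs m n e) mod int v)"
  define t where "t = inv_into {0..<m^n} h (restrict (\<lambda>i. \<bar>e i\<bar>) {..<n})"
  define b' where "b' = nat ((int y + negs m n e') mod int v)"
  define t' where "t' = inv_into {0..<m^n} h (restrict (\<lambda>i. \<bar>e' i\<bar>) {..<n})"
  have b: "b < v" unfolding b_def using vpos by (simp add: nat_less_iff)
  have b': "b' < v" unfolding b'_def using vpos by (simp add: nat_less_iff)
  have eq: "b + v * t = b' + v * t'" using assms(3) unfolding lab_def b_def[symmetric] t_def[symmetric]
    b'_def[symmetric] t'_def[symmetric] by simp
  have "b = (b + v * t) mod v" using b by simp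
  also have "\<dots> = (b' + v * t') mod v" using eq by simp
  also have "\<dots> = b'" using b' by simp
  finally have bb: "b = b'" .
  then have "t = t'" using eq vpos by simp
  then have "h t = h t'" by simp
  then have "restrict (\<lambda>i. \<bar>e i\<bar>) {..<n} = restrict (\<lambda>i. \<bar>e' i\<bar>) {..<n}"
    unfolding t_def t'_def using idx_props[OF absv_Cp[OF assms(1)]] idx_props[OF absv_Cp[OF assms(2)]] by simp
  then have abs: "\<forall>i<n. \<bar>e i\<bar> = \<bar>e' i\<bar>" by (metis lessThan_iff restrict_apply')
  have "(int x + negs m n e) mod int v = (int y + negs m n e') mod int v"
    using bb unfolding b_def b'_def using vpos by (simp add: nat_eq_iff2)
  then have "int v dvd (int x + negs m n e - (int y + negs m n e'))" by (simp add: mod_eq_dvd_iff)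
  then show ?thesis using abs by (simp add: algebra_simps)
qed

lemma cross:
  assumes a1: "adj m n v j1 k1 e1" and a2: "adj m n v j2 k2 e2"
    and base: "int v dvd (int j1 + negs m n e1 - int j2 - negs m n e2)"
    and abs: "\<forall>i<n. \<bar>e1 i\<bar> = \<bar>e2 i\<bar>" and i0: "i0 < n" "e1 i0 \<noteq> e2 i0"
  shows "\<not> adj m n v j1 k2 e3"
proof
  assume a3: "adj m n v j1 k2 e3"
  have E: "e1 \<in> EE m n" "e2 \<in> EE m n" "e3 \<in> EE m n" using a1 a2 a3 unfolding adj_def by auto
  define f where "f i = e2 i - e3 i + min (e1 i) 0 - min (e2 i) 0" for i
  have "int v dvd ((int k2 - int j1 - rep m n e3) - (int k2 - int j2 - rep m n e2)
      + (int j1 + negs m n e1 - int j2 - negs m n e2))"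
    using a2 a3 base unfolding adj_def by (metis dvd_add dvd_diff)
  moreover have "(int k2 - int j1 - rep m n e3) - (int k2 - int j2 - rep m n e2)
      + (int j1 + negs m n e1 - int j2 - negs m n e2) = (\<Sum>i<n. f i * a^i)"
    unfolding rep_def negs_def f_def
    by (simp only: left_diff_distrib distrib_right sum_subtractf sum.distrib; (linarith)?)
  ultimately have d: "int v dvd (\<Sum>i<n. f i * a^i)" by simp
  have "\<forall>i<n. \<bar>f i\<bar> \<le> 2 * int m"
  proof (intro allI impI)
    fix i assume i: "i < n"
    then show "\<bar>f i\<bar> \<le> 2 * int m" using EE_bound[OF E(1) i] EE_bound[OF E(2) i] EE_bound[OF E(3) i]
      unfolding f_def by (auto simp: min_def abs_le_iff)
  qed
  then have "\<forall>i<n. f i = 0" using d by (rule uniq)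
  then have "f i0 = 0" using i0 by blast
  moreover have "e3 i0 \<noteq> 0" using EE_bound[OF E(3) i0(1)] by simp
  moreover have "e1 i0 \<noteq> 0" "e2 i0 \<noteq> 0" "\<bar>e1 i0\<bar> = \<bar>e2 i0\<bar>"
    using EE_bound[OF E(1) i0(1)] EE_bound[OF E(2) i0(1)] abs i0 by auto
  ultimately show False using i0 unfolding f_def by (auto simp: min_def abs_if split: if_splits)
qed

lemma g_adj:
  assumes "e \<in> EE m n"
  shows "adj m n v (nat ((int k - rep m n e) mod int v)) k e \<and> nat ((int k - rep m n e) mod int v) < v"
proof -
  have "int (nat ((int k - rep m n e) mod int v)) = (int k - rep m n e) mod int v"
    using vpos by simp
  moreover have "int v dvd (int k - rep m n e) - (int k - rep m n e) mod int v"
    by (simp add: minus_mod_eq_mult_div)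
  ultimately show ?thesis unfolding adj_def using assms vpos by (simp add: nat_less_iff algebra_simps)
qed

lemma adj_g:
  assumes "j < v" "adj m n v j k e"
  shows "j = nat ((int k - rep m n e) mod int v)"
proof -
  have "int v dvd (int k - rep m n e - int j)" using assms(2) unfolding adj_def by (simp add: algebra_simps)
  then have "(int k - rep m n e) mod int v = int j mod int v" by (simp add: mod_eq_dvd_iff)
  also have "\<dots> = int j" using assms(1) by simp
  finally show ?thesis by simp
qed

lemma card_D0: "card (D0 m) = 2 * m"
proof -
  have "card {-int m..int m} = 2 * m + 1" by simp
  then show ?thesis unfolding D0_def by (simp add: card_Diff_singleton)
qed

lemma card_EE: "card (EE m n) = (2 * m) ^ n"
  unfolding EE_def by (simp add: card_PiE card_D0)

lemma finite_EE: "finite (EE m n)"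
  unfolding EE_def D0_def by (simp add: finite_PiE)

lemma pda4:
  assumes r: "j1 < v" "k1 < v" "j2 < v" "k2 < v"
    and h: "PP m n v h j1 k1 = Some s \<and> PP m n v h j2 k2 = Some s \<and> (j1, k1) \<noteq> (j2, k2)"
  shows "j1 \<noteq> j2 \<and> k1 \<noteq> k2 \<and> PP m n v h j1 k2 = None \<and> PP m n v h j2 k1 = None"
proof -
  obtain e1 where a1: "adj m n v j1 k1 e1" "s = lab m n v h j1 e1" using h PP_Some[THEN iffD1] by metis
  obtain e2 where a2: "adj m n v j2 k2 e2" "s = lab m n v h j2 e2" using h PP_Some[THEN iffD1] by metis
  have E: "e1 \<in> EE m n" "e2 \<in> EE m n" using a1 a2 unfolding adj_def by auto
  have L: "int v dvd (int j1 + negs m n e1 - int j2 - negs m n e2)" "\<forall>i<n. \<bar>e1 i\<bar> = \<bar>e2 i\<bar>"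
  proof -
    have "lab m n v h j1 e1 = lab m n v h j2 e2" using a1(2) a2(2) by simp
    from lab_eq[OF E this] show "int v dvd (int j1 + negs m n e1 - int j2 - negs m n e2)" "\<forall>i<n. \<bar>e1 i\<bar> = \<bar>e2 i\<bar>"
      by auto
  qed
  have "int j2 + negs m n e2 - int j1 - negs m n e1 = - (int j1 + negs m n e1 - int j2 - negs m n e2)"
    by simp
  then have L': "int v dvd (int j2 + negs m n e2 - int j1 - negs m n e1)" "\<forall>i<n. \<bar>e2 i\<bar> = \<bar>e1 i\<bar>"
    using L by (simp_all only: dvd_minus_iff) auto
  have "\<exists>i0<n. e1 i0 \<noteq> e2 i0"
  proof (rule ccontr)
    assume "\<not> (\<exists>i0<n. e1 i0 \<noteq> e2 i0)"
    then have "\<forall>i<n. e1 i = e2 i" by blast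
    then have ee: "e1 = e2" using E unfolding EE_def by (intro PiE_ext[of e1 "{..<n}"]) auto
    then have "int v dvd (int j1 - int j2)" using L(1) by simp
    then have jj: "j1 = j2" by (rule small_dvd[OF r(1) r(3)])
    have "int v dvd ((int k1 - int j1 - rep m n e1) - (int k2 - int j2 - rep m n e2))"
      using a1 a2 unfolding adj_def by (metis dvd_diff)
    then have "int v dvd (int k1 - int k2)" using ee jj by simp
    then have "k1 = k2" by (rule small_dvd[OF r(2) r(4)])
    with jj h show False by simp
  qed
  then obtain i0 where i0: "i0 < n" "e1 i0 \<noteq> e2 i0" by blast
  have jne: "j1 \<noteq> j2"
  proof
    assume jj: "j1 = j2"
    define f where "f i = min (e1 i) 0 - min (e2 i) 0" for i
    have "(\<Sum>i<n. f i * a^i) = negs m n e1 - negs m n e2" unfolding f_def negs_def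
      by (simp only: left_diff_distrib sum_subtractf)
    then have "int v dvd (\<Sum>i<n. f i * a^i)" using L(1) jj by simp
    moreover have "\<forall>i<n. \<bar>f i\<bar> \<le> 2 * int m"
    proof (intro allI impI)
      fix i assume i: "i < n"
      show "\<bar>f i\<bar> \<le> 2 * int m" using EE_bound[OF E(1) i] EE_bound[OF E(2) i]
        unfolding f_def by (auto simp: min_def abs_le_iff)
    qed
    ultimately have "\<forall>i<n. f i = 0" by (rule uniq[rotated])
    then have "f i0 = 0" using i0 by blast
    then show False using i0(2) L(2)[rule_format, OF i0(1)] EE_bound[OF E(1) i0(1)] EE_bound[OF E(2) i0(1)]
      unfolding f_def by (auto simp: min_def abs_if split: if_splits)
  qed
  have kne: "k1 \<noteq> k2"
  proof
    assume kk: "k1 = k2"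
    define f where "f i = e2 i - e1 i + min (e1 i) 0 - min (e2 i) 0" for i
    have "int v dvd ((int k1 - int j1 - rep m n e1) - (int k2 - int j2 - rep m n e2)
      + (int j1 + negs m n e1 - int j2 - negs m n e2))"
      using a1 a2 L(1) unfolding adj_def by (metis dvd_add dvd_diff)
    moreover have "(int k1 - int j1 - rep m n e1) - (int k2 - int j2 - rep m n e2)
      + (int j1 + negs m n e1 - int j2 - negs m n e2) = (\<Sum>i<n. f i * a^i)"
      using kk unfolding rep_def negs_def f_def
      by (simp only: left_diff_distrib distrib_right sum_subtractf sum.distrib; (linarith)?)
    ultimately have "int v dvd (\<Sum>i<n. f i * a^i)" by simp
    moreover have "\<forall>i<n. \<bar>f i\<bar> \<le> 2 * int m"
    proof (intro allI impI)
      fix i assume i: "i < n"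
      show "\<bar>f i\<bar> \<le> 2 * int m" using EE_bound[OF E(1) i] EE_bound[OF E(2) i]
        unfolding f_def by (auto simp: min_def abs_le_iff)
    qed
    ultimately have "\<forall>i<n. f i = 0" by (rule uniq[rotated])
    then have "f i0 = 0" using i0 by blast
    then show False using i0(2) L(2)[rule_format, OF i0(1)] EE_bound[OF E(1) i0(1)] EE_bound[OF E(2) i0(1)]
      unfolding f_def by (auto simp: min_def abs_if split: if_splits)
  qed
  have "PP m n v h j1 k2 = None" unfolding PP_None
    using cross[OF a1(1) a2(1) L(1) L(2) i0] by blast
  moreover have "PP m n v h j2 k1 = None" unfolding PP_None
    using cross[OF a2(1) a1(1) L'(1) L'(2) i0(1) not_sym[OF i0(2)]] by blast
  ultimately show "j1 \<noteq> j2 \<and> k1 \<noteq> k2 \<and> PP m n v h j1 k2 = None \<and> PP m n v h j2 k1 = None"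
    using jne kne by blast
qed

theorem pda: "is_PDA v v (v - (2*m)^n) (m^n * v) (PP m n v h)"
  unfolding is_PDA_def
proof (intro conjI allI impI ballI)
  fix j k s assume "j < v" "k < v" "PP m n v h j k = Some s"
  then obtain e where "adj m n v j k e" "s = lab m n v h j e" using PP_Some by blast
  then show "s \<in> {1..m^n * v}" using lab_range unfolding adj_def by blast
next
  fix k assume k: "k < v"
  define Nk where "Nk = {j. j < v \<and> (\<exists>e. adj m n v j k e)}"
  define g where "g e = nat ((int k - rep m n e) mod int v)" for e
  have "Nk = g ` EE m n"
  proof
    show "Nk \<subseteq> g ` EE m n"
    proof
      fix j assume "j \<in> Nk"
      then obtain e where je: "j < v" "adj m n v j k e" unfolding Nk_def by blast
      then have "j = g e" unfolding g_def by (rule adj_g)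
      moreover have "e \<in> EE m n" using je(2) unfolding adj_def by blast
      ultimately show "j \<in> g ` EE m n" by blast
    qed
    show "g ` EE m n \<subseteq> Nk"
    proof
      fix j assume "j \<in> g ` EE m n"
      then obtain e where e: "e \<in> EE m n" "j = g e" by blast
      from g_adj[OF e(1), of k] show "j \<in> Nk" unfolding Nk_def g_def e(2) by blast
    qed
  qed
  moreover have "inj_on g (EE m n)"
  proof
    fix e e' assume e: "e \<in> EE m n" and e': "e' \<in> EE m n" and ge: "g e = g e'"
    have A1: "adj m n v (g e) k e" using g_adj[OF e, of k] unfolding g_def by blast
    have "adj m n v (g e') k e'" using g_adj[OF e', of k] unfolding g_def by blast
    then have A2: "adj m n v (g e) k e'" using ge by simp
    show "e = e'" by (rule adj_unique[OF A1 A2])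
  qed
  ultimately have cN: "card Nk = (2*m)^n" using card_EE by (simp add: card_image)
  have "{j. j < v \<and> PP m n v h j k = None} = {..<v} - Nk" unfolding Nk_def PP_None by auto
  moreover have "Nk \<subseteq> {..<v}" unfolding Nk_def by auto
  ultimately show "card {j. j < v \<and> PP m n v h j k = None} = v - (2*m)^n"
    using cN by (simp add: card_Diff_subset finite_subset)
next
  fix s assume s: "s \<in> {1..m^n * v}"
  define t where "t = (s - 1) div v"
  define b where "b = (s - 1) mod v"
  have "s - 1 < m^n * v" using s by auto
  then have t: "t < m^n" unfolding t_def using vpos by (simp add: div_less_iff_less_mult)
  have b: "b < v" unfolding b_def using vpos by simp
  have sbt: "s = 1 + b + v * t" unfolding b_def t_def using s by simp
  define c where "c = h t"
  have cC: "c \<in> Cp m n" unfolding c_def using hb t unfolding bij_betw_def by auto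
  have cE: "c \<in> EE m n" using cC Cp_EE by blast
  define k where "k = nat ((int b + rep m n c) mod int v)"
  have k: "k < v" unfolding k_def using vpos by (simp add: nat_less_iff)
  have "int v dvd (int b + rep m n c) mod int v - (int b + rep m n c)"
    by (metis dvd_minus_iff minus_diff_eq minus_mod_eq_mult_div dvd_triv_left)
  then have ad: "adj m n v b k c" unfolding adj_def k_def using cE vpos by (simp add: algebra_simps)
  have cpos: "\<forall>i<n. c i \<ge> 1" using cC unfolding Cp_def by (auto simp: PiE_iff)
  have negs0: "negs m n c = 0" unfolding negs_def
    by (rule sum.neutral) (use cpos in \<open>auto simp: min_def\<close>)
  have "restrict (\<lambda>i. \<bar>c i\<bar>) {..<n} = c"
    using cC cpos unfolding Cp_def by (intro PiE_ext[of _ "{..<n}" "\<lambda>_. {1..int m}"]) (auto simp: restrict_PiE_iff PiE_iff)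
  moreover have "inv_into {0..<m^n} h c = t" unfolding c_def
    using hb t unfolding bij_betw_def by (simp add: inv_into_f_f)
  ultimately have "lab m n v h b c = s" unfolding lab_def negs0 using sbt b by simp
  then have "PP m n v h b k = Some s" using ad by (intro PP_Some[THEN iffD2]) blast
  then show "\<exists>j<v. \<exists>k<v. PP m n v h j k = Some s" using b k by blast
qed (blast dest: pda4)+

end


theorem theorem3:
  fixes n v :: nat
  assumes "n > 0" and "odd v" and "v > 0"
    and "root n (real v) \<ge> 3"
  defines "q \<equiv> root n (real v)"
  defines "m \<equiv> nat \<lfloor>(q - 1) / 2\<rfloor>"
  shows "exists_PDA v v (v - (2 * m) ^ n) (m ^ n * v)
         \<and> (\<forall>N::nat. N > 0 \<longrightarrow>
              exists_caching_scheme v (real N * (1 - 2 ^ n * real m ^ n / q ^ n)) N v (real m ^ n))"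
proof -
  have q3: "q \<ge> 3" using assms(4) unfolding q_def by simp
  have qn: "q ^ n = real v" unfolding q_def using assms(1) by (simp add: real_root_pow_pos2)
  define fl where "fl = \<lfloor>(q - 1) / 2\<rfloor>"
  have fl1: "fl \<ge> 1" unfolding fl_def using q3 by (simp add: le_floor_iff)
  have mfl: "real m = of_int fl" unfolding m_def fl_def[symmetric] using fl1 by simp
  have "of_int fl \<le> (q - 1) / 2" unfolding fl_def by (rule of_int_floor_le)
  then have mq: "2 * real m + 1 \<le> q" using mfl by simp
  have m1: "m \<ge> 1" unfolding m_def fl_def[symmetric] using fl1 by simp
  have "(2 * real m + 1) ^ n \<le> q ^ n" by (rule power_mono[OF mq]) simp
  then have "real ((2 * m + 1) ^ n) \<le> real v" using qn by (simp add: add.commute)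
  then have mv: "(2 * m + 1) ^ n \<le> v" by (simp only: of_nat_le_iff)
  have finC: "finite (Cp m n)" unfolding Cp_def by (simp add: finite_PiE)
  have cardC: "card (Cp m n) = m ^ n" unfolding Cp_def by (simp add: card_PiE)
  obtain h where hb: "bij_betw h {0..<m^n} (Cp m n)"
    using ex_bij_betw_nat_finite[OF finC] unfolding cardC by blast
  interpret cons m n v h using m1 mv hb by unfold_locales
  have P: "is_PDA v v (v - (2*m)^n) (m^n * v) (PP m n v h)" by (rule pda)
  have le: "(2 * m) ^ n \<le> v"
    using power_mono[of "2*m" "2*m+1" n] mv by linarith
  have part2: "exists_caching_scheme v (real N * (1 - 2 ^ n * real m ^ n / q ^ n)) N v (real m ^ n)"
    if "N > 0" for N :: nat
  proof (rule pda_scheme[OF P])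
    show "v > 0" by (rule vpos)
    have "real (v - (2 * m) ^ n) = real v - 2 ^ n * real m ^ n"
      using le by (simp add: of_nat_diff power_mult_distrib)
    also have "\<dots> = (1 - 2 ^ n * real m ^ n / q ^ n) * real v"
      using qn vpos by (simp add: field_simps)
    finally show "real N * real (v - (2 * m) ^ n) \<le> real N * (1 - 2 ^ n * real m ^ n / q ^ n) * real v"
      by simp
    show "real (m ^ n * v) \<le> real m ^ n * real v" by simp
  qed
  show ?thesis using P part2 unfolding exists_PDA_def by blast
qed

end
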